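(* Let $p(\mathbf{x};\theta)=f(\mathbf{x};\theta)/z(\theta)$ be a pairwise exponential family graphical model with parameter $\theta\in\Theta$, let $\phi=\mathrm{diag}(\theta)$, $\mu=z(\theta)/z(\phi)$, let $n\ge 1$ be an integer, $\gamma_k=\binom{n+k-1}{k}$, and let $\nu>0$. Let $\widetilde{T}_1,\widetilde{T}_2,\ldots$ be i.i.d. copies of $\widetilde{T}=\frac1N\sum_{i=1}^N f(\mathbf{y}_i;\theta)/f(\mathbf{y}_i;\phi)$ with $\mathbf{y}_i\overset{iid}{\sim}p(\cdot;\phi)$, let $U_k=\prod_{j=1}^k(1-\nu\widetilde{T}_j)$ (with $U_0=1$), let $R$ be a nonnegative-integer-valued random variable independent of the $\widetilde{T}_j$ with $\mathbb{P}(R\ge k)>0$ for all $k$, and set $$T=\sum_{k=0}^{R}\frac{\gamma_k}{\mathbb{P}(R\ge k)}\,U_k .$$ Suppose $\nu$ is such that $\mathbb{E}|1-\nu\widetilde{T}|<1$. Then $\mathbb{E}(|T|)<\infty$.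
   Context: A pairwise exponential family graphical model (PEGM) on $\mathbf{x}=(x_1,\dots,x_p)$ has unnormalized density $f(\mathbf{x};\theta)=\exp\{\sum_j T(x_j)\theta_{jj}+\sum_{j\ne k}T(x_j,x_k)\theta_{jk}\}$ with respect to a dominating measure, where $T(\cdot)$ and $T(\cdot,\cdot)$ are fixed sufficient statistics, $\theta\in\mathbb{R}^{p\times p}$, $z(\theta)=\int f(\mathbf{x};\theta)\,d\mathbf{x}$, and $\Theta=\{\theta: z(\theta)<\infty\}$. For $\theta\in\Theta$, $\phi=\mathrm{diag}(\theta)$ denotes the matrix with the same diagonal as $\theta$ and all off-diagonal entries zero (the independence model), assumed to lie in $\Theta$. $N\ge1$ is an integer. *)

theory Defs
  imports "HOL-Probability.Probability"
begin

text \<open>T1 = node sufficient statistic T(.), T2 = edge sufficient statistic T(.,.),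
  theta : 'p => 'p => real is the parameter matrix.\<close>

definition pegm_f ::
  "('b \<Rightarrow> real) \<Rightarrow> ('b \<Rightarrow> 'b \<Rightarrow> real) \<Rightarrow> ('p::finite \<Rightarrow> 'p \<Rightarrow> real) \<Rightarrow> ('p \<Rightarrow> 'b) \<Rightarrow> real"
  where "pegm_f T1 T2 \<theta> x =
    exp ((\<Sum>j\<in>UNIV. T1 (x j) * \<theta> j j)
       + (\<Sum>(j,k)\<in>{(j,k). j \<noteq> k}. T2 (x j) (x k) * \<theta> j k))"

definition pegm_z ::
  "('p \<Rightarrow> 'b) measure \<Rightarrow> ('b \<Rightarrow> real) \<Rightarrow> ('b \<Rightarrow> 'b \<Rightarrow> real) \<Rightarrow> ('p::finite \<Rightarrow> 'p \<Rightarrow> real) \<Rightarrow> ennreal"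
  where "pegm_z dx T1 T2 \<theta> = (\<integral>\<^sup>+ x. ennreal (pegm_f T1 T2 \<theta> x) \<partial>dx)"

definition pegm_Theta ::
  "('p \<Rightarrow> 'b) measure \<Rightarrow> ('b \<Rightarrow> real) \<Rightarrow> ('b \<Rightarrow> 'b \<Rightarrow> real) \<Rightarrow> ('p::finite \<Rightarrow> 'p \<Rightarrow> real) set"
  where "pegm_Theta dx T1 T2 = {\<theta>. pegm_z dx T1 T2 \<theta> < \<infinity>}"

definition diag_part :: "('p \<Rightarrow> 'p \<Rightarrow> real) \<Rightarrow> ('p \<Rightarrow> 'p \<Rightarrow> real)"
  where "diag_part \<theta> = (\<lambda>j k. if j = k then \<theta> j j else 0)"

definition pegm_density ::
  "('p \<Rightarrow> 'b) measure \<Rightarrow> ('b \<Rightarrow> real) \<Rightarrow> ('b \<Rightarrow> 'b \<Rightarrow> real) \<Rightarrow> ('p::finite \<Rightarrow> 'p \<Rightarrow> real) \<Rightarrow> ('p \<Rightarrow> 'b) \<Rightarrow> ennreal"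
  where "pegm_density dx T1 T2 \<theta> x = ennreal (pegm_f T1 T2 \<theta> x) / pegm_z dx T1 T2 \<theta>"

end

theory Submission imports Defs "HOL-Analysis.Generalised_Binomial_Theorem" begin

lemma (in prob_space) indep_sets_reindex:
  assumes ind: "indep_sets F I" and inj: "inj_on g J" and sub: "g ` J \<subseteq> I"
  shows "indep_sets (\<lambda>i. F (g i)) J"
  unfolding indep_sets_def
proof (intro conjI ballI allI impI)
  fix i assume "i \<in> J"
  then show "F (g i) \<subseteq> events" using ind sub unfolding indep_sets_def by auto
next
  fix K A assume K: "K \<subseteq> J" "K \<noteq> {}" "finite K" and A: "A \<in> (\<Pi> j\<in>K. F (g j))"
  define B where "B = (\<lambda>x. A (the_inv_into K g x))"
  have injK: "inj_on g K" using inj K(1) by (rule inj_on_subset)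
  have BA: "B (g j) = A j" if "j \<in> K" for j
    using that injK by (simp add: B_def the_inv_into_f_f)
  have "prob (\<Inter>x\<in>g`K. B x) = (\<Prod>x\<in>g`K. prob (B x))"
    by (rule indep_setsD[OF ind]) (use K sub A BA in auto)
  moreover have "(\<Inter>x\<in>g`K. B x) = (\<Inter>j\<in>K. A j)" using BA by auto
  moreover have "(\<Prod>x\<in>g`K. prob (B x)) = (\<Prod>j\<in>K. prob (A j))"
    using injK BA by (simp add: prod.reindex)
  ultimately show "prob (\<Inter>j\<in>K. A j) = (\<Prod>j\<in>K. prob (A j))" by simp
qed

lemma (in prob_space) indep_vars_reindex:
  assumes ind: "indep_vars M' X I" and inj: "inj_on g J" and sub: "g ` J \<subseteq> I"
  shows "indep_vars (\<lambda>i. M' (g i)) (\<lambda>i. X (g i)) J"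
  using ind sub unfolding indep_vars_def2
  by (auto intro!: indep_sets_reindex[OF _ inj sub, where F="\<lambda>i. {X i -` A \<inter> space M |A. A \<in> sets (M' i)}"])

lemma binom_summable:
  fixes r :: real and n :: nat
  assumes "0 \<le> r" "r < 1" "n \<ge> 1"
  shows "summable (\<lambda>k. real ((n + k - 1) choose k) * r ^ k)"
proof -
  have "(\<lambda>k. ((- real n) gchoose k) * (-r)^k) sums (1 + (-r)) powr (- real n)"
    by (rule gen_binomial_real) (use assms in auto)
  moreover have "((- real n) gchoose k) * (-r)^k = real ((n + k - 1) choose k) * r ^ k" for k
  proof -
    have "((- real n) gchoose k) = (-1)^k * ((real n + real k - 1) gchoose k)"
      by (rule gbinomial_minus)
    moreover have "real ((n + k - 1) choose k) = (real n + real k - 1) gchoose k"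
      using assms(3) by (simp add: binomial_gbinomial of_nat_diff)
    ultimately show ?thesis
      by (simp add: power_minus[of r] mult_ac)
  qed
  ultimately show ?thesis by (simp add: sums_summable)
qed

theorem proposition1:
  fixes M :: "'a measure"
    and dx :: "('p::finite \<Rightarrow> 'b) measure"
    and T1 :: "'b \<Rightarrow> real" and T2 :: "'b \<Rightarrow> 'b \<Rightarrow> real"
    and \<theta> :: "'p \<Rightarrow> 'p \<Rightarrow> real"
    and N n :: nat and \<nu> :: real
    and Y :: "nat \<Rightarrow> nat \<Rightarrow> 'a \<Rightarrow> ('p \<Rightarrow> 'b)"
    and R :: "'a \<Rightarrow> nat"
    and Tt :: "nat \<Rightarrow> 'a \<Rightarrow> real"
    and U :: "nat \<Rightarrow> 'a \<Rightarrow> real"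
    and T :: "'a \<Rightarrow> real"
    and \<gamma> :: "nat \<Rightarrow> real"
  assumes "prob_space M"
    and meas: "\<And>th. (\<lambda>x. pegm_f T1 T2 th x) \<in> borel_measurable dx"
    and \<theta>_in: "\<theta> \<in> pegm_Theta dx T1 T2"
    and \<phi>_in: "diag_part \<theta> \<in> pegm_Theta dx T1 T2"
    and N: "N \<ge> 1" and n: "n \<ge> 1" and \<nu>: "\<nu> > 0"
    and \<gamma>_def: "\<And>k. \<gamma> k = real ((n + k - 1) choose k)"
    \<comment> \<open>all samples y are i.i.d. from p(.;phi)\<close>
    and Y_distr: "\<And>j i. distributed M dx (Y j i) (pegm_density dx T1 T2 (diag_part \<theta>))"
    and Y_indep: "prob_space.indep_vars M (\<lambda>_. dx) (\<lambda>(j, i). Y j i) UNIV"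
    \<comment> \<open>the j-th copy of the estimator T-tilde (j >= 1)\<close>
    and Tt_def: "\<And>j \<omega>. Tt j \<omega> = (1 / real N) *
         (\<Sum>i<N. pegm_f T1 T2 \<theta> (Y j i \<omega>) / pegm_f T1 T2 (diag_part \<theta>) (Y j i \<omega>))"
    \<comment> \<open>R is independent of the T-tilde's (index 0 = R, index j >= 1 = Tt j)\<close>
    and R_indep: "prob_space.indep_vars M (\<lambda>_. borel)
                    (\<lambda>j \<omega>. if j = 0 then real (R \<omega>) else Tt j \<omega>) UNIV"
    and R_pos: "\<And>k. prob_space.prob M {\<omega> \<in> space M. R \<omega> \<ge> k} > 0"
    and U_def: "\<And>k \<omega>. U k \<omega> = (\<Prod>j\<in>{1..k}. 1 - \<nu> * Tt j \<omega>)"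
    and T_def: "\<And>\<omega>. T \<omega> = (\<Sum>k\<in>{0..R \<omega>}.
                    \<gamma> k / prob_space.prob M {\<omega>' \<in> space M. R \<omega>' \<ge> k} * U k \<omega>)"
    and small: "(\<integral>\<^sup>+ \<omega>. ennreal \<bar>1 - \<nu> * Tt 1 \<omega>\<bar> \<partial>M) < 1"
  shows "(\<integral>\<^sup>+ \<omega>. ennreal \<bar>T \<omega>\<bar> \<partial>M) < \<infinity>"
proof -
  interpret prob_space M by fact
  have Yrv[measurable]: "Y j i \<in> measurable M dx" for j i
    using Y_distr[of j i] by (rule distributed_measurable)
  note meas[measurable]
  define G where "G x = (1 / real N) * (\<Sum>i<N. pegm_f T1 T2 \<theta> (x i) / pegm_f T1 T2 (diag_part \<theta>) (x i))"
    for x :: "nat \<Rightarrow> 'p \<Rightarrow> 'b"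
  have Gm[measurable]: "G \<in> borel_measurable (PiM {..<N} (\<lambda>_. dx))"
    unfolding G_def by measurable
  define V where "V j = (\<lambda>\<omega>. \<lambda>i\<in>{..<N}. Y j i \<omega>)" for j
  have Vm[measurable]: "V j \<in> measurable M (PiM {..<N} (\<lambda>_. dx))" for j
    unfolding V_def by measurable
  have TtG: "Tt j \<omega> = G (V j \<omega>)" for j \<omega>
    by (simp add: Tt_def G_def V_def)
  have distrV: "distr M (PiM {..<N} (\<lambda>_. dx)) (V j) =
      PiM {..<N} (\<lambda>_. density dx (pegm_density dx T1 T2 (diag_part \<theta>)))" for j
  proof -
    have ind: "indep_vars (\<lambda>_. dx) (\<lambda>i. Y j i) {..<N}"
      using indep_vars_reindex[OF Y_indep, of "Pair j" "{..<N}"] by (simp add: inj_on_def)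
    have "distr M (PiM {..<N} (\<lambda>_. dx)) (V j) = PiM {..<N} (\<lambda>i. distr M dx (Y j i))"
    proof -
      have "0 \<in> {..<N}" using N by simp
      then have ne: "{..<N} \<noteq> {}" by blast
      have eq: "indep_vars (\<lambda>_. dx) (\<lambda>i. Y j i) {..<N} \<longleftrightarrow>
         distr M (PiM {..<N} (\<lambda>_. dx)) (\<lambda>x. \<lambda>i\<in>{..<N}. Y j i x) = PiM {..<N} (\<lambda>i. distr M dx (Y j i))"
        by (rule indep_vars_iff_distr_eq_PiM'[OF ne]) (rule Yrv)
      show ?thesis unfolding V_def using eq ind by blast
    qed
    also have "\<dots> = PiM {..<N} (\<lambda>_. density dx (pegm_density dx T1 T2 (diag_part \<theta>)))"
      by (intro PiM_cong refl distributed_distr_eq_density[OF Y_distr])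
    finally show ?thesis .
  qed
  have rho_eq: "(\<integral>\<^sup>+\<omega>. ennreal \<bar>1 - \<nu> * Tt j \<omega>\<bar> \<partial>M) = (\<integral>\<^sup>+\<omega>. ennreal \<bar>1 - \<nu> * Tt 1 \<omega>\<bar> \<partial>M)" for j
  proof -
    have "(\<integral>\<^sup>+\<omega>. ennreal \<bar>1 - \<nu> * Tt j \<omega>\<bar> \<partial>M) =
      (\<integral>\<^sup>+x. ennreal \<bar>1 - \<nu> * G x\<bar> \<partial>distr M (PiM {..<N} (\<lambda>_. dx)) (V j))" for j
      by (subst nn_integral_distr) (auto simp: TtG)
    then show ?thesis by (simp only: distrV)
  qed
  define \<rho> where "\<rho> = (\<integral>\<^sup>+\<omega>. ennreal \<bar>1 - \<nu> * Tt 1 \<omega>\<bar> \<partial>M)"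
  have "\<rho> \<noteq> \<top>" using small unfolding \<rho>_def by auto
  then obtain r where r: "\<rho> = ennreal r" "0 \<le> r" by (cases \<rho>) auto
  have r1: "r < 1" using small r unfolding \<rho>_def by simp
  have Rind: "\<forall>i\<in>UNIV. random_variable borel (\<lambda>\<omega>. if i = 0 then real (R \<omega>) else Tt i \<omega>)"
    using R_indep unfolding indep_vars_def2 by blast
  have Rrv[measurable]: "(\<lambda>\<omega>. real (R \<omega>)) \<in> borel_measurable M"
    using Rind[rule_format, of 0] by simp
  have Ttrv[measurable]: "Tt j \<in> borel_measurable M" for j
    unfolding TtG[abs_def] by measurable
  define P where "P k = prob {\<omega> \<in> space M. R \<omega> \<ge> k}" for k
  define c where "c k = \<gamma> k / P k" for k
  have c_nn: "0 \<le> c k" for k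
    unfolding c_def P_def \<gamma>_def by simp
  define X where "X k i \<omega> = ennreal (if i = 0 then indicator {real k..} (real (R \<omega>)) else \<bar>1 - \<nu> * Tt i \<omega>\<bar>)"
    for k i \<omega>
  have Xm[measurable]: "X k i \<in> borel_measurable M" for k i
    unfolding X_def by measurable
  define f where "f k \<omega> = ennreal (c k) * (\<Prod>i\<in>{0..k}. X k i \<omega>)" for k \<omega>
  have fm[measurable]: "f k \<in> borel_measurable M" for k
    unfolding f_def by measurable
  have X0: "(\<integral>\<^sup>+\<omega>. X k 0 \<omega> \<partial>M) = ennreal (P k)" for k
  proof -
    have "(\<integral>\<^sup>+\<omega>. X k 0 \<omega> \<partial>M) = (\<integral>\<^sup>+\<omega>. indicator {\<omega> \<in> space M. R \<omega> \<ge> k} \<omega> \<partial>M)"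
      by (intro nn_integral_cong) (auto simp: X_def indicator_def)
    also have "\<dots> = emeasure M {\<omega> \<in> space M. R \<omega> \<ge> k}"
    proof (rule nn_integral_indicator)
      have "{\<omega> \<in> space M. R \<omega> \<ge> k} = {\<omega> \<in> space M. real (R \<omega>) \<ge> real k}" by auto
      also have "\<dots> \<in> sets M" by measurable
      finally show "{\<omega> \<in> space M. R \<omega> \<ge> k} \<in> sets M" .
    qed
    finally show ?thesis by (simp add: P_def emeasure_eq_measure)
  qed
  have indX: "indep_vars (\<lambda>_. borel) (X k) {0..k}" for k
  proof -
    have "indep_vars (\<lambda>_. borel) (\<lambda>i \<omega>. (\<lambda>t. ennreal (if i = 0 then indicator {real k..} t else \<bar>1 - \<nu> * t\<bar>))
           (if i = 0 then real (R \<omega>) else Tt i \<omega>)) UNIV"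
      by (rule indep_vars_compose2[OF R_indep]) measurable
    then have "indep_vars (\<lambda>_. borel) (\<lambda>i \<omega>. (\<lambda>t. ennreal (if i = 0 then indicator {real k..} t else \<bar>1 - \<nu> * t\<bar>))
           (if i = 0 then real (R \<omega>) else Tt i \<omega>)) {0..k}"
      by (rule indep_vars_subset) auto
    then show ?thesis
      by (rule indep_vars_cong[THEN iffD1, rotated 3]) (auto simp: X_def fun_eq_iff)
  qed
  have intf: "(\<integral>\<^sup>+\<omega>. f k \<omega> \<partial>M) = ennreal (\<gamma> k * r ^ k)" for k
  proof -
    have "(\<integral>\<^sup>+\<omega>. f k \<omega> \<partial>M) = ennreal (c k) * (\<integral>\<^sup>+\<omega>. (\<Prod>i\<in>{0..k}. X k i \<omega>) \<partial>M)"
      unfolding f_def by (rule nn_integral_cmult) measurable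
    also have "(\<integral>\<^sup>+\<omega>. (\<Prod>i\<in>{0..k}. X k i \<omega>) \<partial>M) = (\<Prod>i\<in>{0..k}. \<integral>\<^sup>+\<omega>. X k i \<omega> \<partial>M)"
      by (rule indep_vars_nn_integral) (auto simp: indX)
    also have "\<dots> = (\<integral>\<^sup>+\<omega>. X k 0 \<omega> \<partial>M) * (\<Prod>i\<in>{Suc 0..k}. \<integral>\<^sup>+\<omega>. X k i \<omega> \<partial>M)"
      by (rule prod.atLeast_Suc_atMost) simp
    also have "(\<Prod>i\<in>{Suc 0..k}. \<integral>\<^sup>+\<omega>. X k i \<omega> \<partial>M) = (\<Prod>i\<in>{Suc 0..k}. ennreal r)"
      proof (intro prod.cong refl)
        fix i assume "i \<in> {Suc 0..k}"
        then have "X k i = (\<lambda>\<omega>. ennreal \<bar>1 - \<nu> * Tt i \<omega>\<bar>)" by (auto simp: X_def fun_eq_iff)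
        then show "(\<integral>\<^sup>+\<omega>. X k i \<omega> \<partial>M) = ennreal r"
          using rho_eq[of i] r(1) unfolding \<rho>_def by simp
      qed
    also have "\<dots> = ennreal (r ^ k)"
      using r(2) by (simp add: prod_ennreal ennreal_power)
    finally have "(\<integral>\<^sup>+\<omega>. f k \<omega> \<partial>M) = ennreal (c k) * (ennreal (P k) * ennreal (r ^ k))"
      by (simp add: X0)
    also have "\<dots> = ennreal (c k * P k * r ^ k)"
      using c_nn[of k] r(2) measure_nonneg[of M "{\<omega> \<in> space M. R \<omega> \<ge> k}"]
      by (simp add: ennreal_mult mult.assoc P_def)
    also have "c k * P k = \<gamma> k"
      using R_pos[of k] unfolding c_def P_def by simp
    finally show ?thesis .
  qed
  have pt: "ennreal \<bar>T \<omega>\<bar> \<le> (\<Sum>k. f k \<omega>)" if \<omega>: "\<omega> \<in> space M" for \<omega>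
  proof -
    have "\<bar>T \<omega>\<bar> \<le> (\<Sum>k\<in>{0..R \<omega>}. \<bar>c k * U k \<omega>\<bar>)"
      unfolding T_def c_def P_def by (rule sum_abs)
    also have "\<dots> = (\<Sum>k\<in>{0..R \<omega>}. c k * \<bar>U k \<omega>\<bar>)"
      using c_nn by (simp add: abs_mult)
    finally have "ennreal \<bar>T \<omega>\<bar> \<le> ennreal (\<Sum>k\<in>{0..R \<omega>}. c k * \<bar>U k \<omega>\<bar>)"
      by (rule ennreal_leI)
    also have "\<dots> = (\<Sum>k\<in>{0..R \<omega>}. ennreal (c k * \<bar>U k \<omega>\<bar>))"
      using c_nn by (simp add: sum_ennreal)
    also have "\<dots> = (\<Sum>k\<in>{0..R \<omega>}. f k \<omega>)"
    proof (intro sum.cong refl)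
      fix k assume k: "k \<in> {0..R \<omega>}"
      have "(\<Prod>i\<in>{0..k}. X k i \<omega>) = X k 0 \<omega> * (\<Prod>i\<in>{Suc 0..k}. X k i \<omega>)"
        by (rule prod.atLeast_Suc_atMost) simp
      also have "X k 0 \<omega> = 1" using k by (simp add: X_def)
      also have "(\<Prod>i\<in>{Suc 0..k}. X k i \<omega>) = (\<Prod>i\<in>{Suc 0..k}. ennreal \<bar>1 - \<nu> * Tt i \<omega>\<bar>)"
        by (intro prod.cong refl) (auto simp: X_def)
      also have "\<dots> = ennreal \<bar>U k \<omega>\<bar>"
        by (simp add: prod_ennreal U_def abs_prod)
      finally show "ennreal (c k * \<bar>U k \<omega>\<bar>) = f k \<omega>"
        using c_nn[of k] by (simp add: f_def ennreal_mult)
    qed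
    also have "\<dots> = (\<Sum>k. f k \<omega>)"
    proof (rule suminf_finite[symmetric])
      fix k assume "k \<notin> {0..R \<omega>}"
      then have "X k 0 \<omega> = 0" by (simp add: X_def)
      then show "f k \<omega> = 0" unfolding f_def
        by (subst prod.atLeast_Suc_atMost) auto
    qed simp
    finally show ?thesis .
  qed
  have "(\<integral>\<^sup>+\<omega>. ennreal \<bar>T \<omega>\<bar> \<partial>M) \<le> (\<integral>\<^sup>+\<omega>. (\<Sum>k. f k \<omega>) \<partial>M)"
    by (rule nn_integral_mono) (rule pt)
  also have "\<dots> = (\<Sum>k. \<integral>\<^sup>+\<omega>. f k \<omega> \<partial>M)"
    by (rule nn_integral_suminf) measurable
  also have "\<dots> = (\<Sum>k. ennreal (\<gamma> k * r ^ k))"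
    by (simp add: intf)
  also have "\<dots> = ennreal (\<Sum>k. \<gamma> k * r ^ k)"
    using binom_summable[OF r(2) r1 n] r(2)
    by (intro suminf_ennreal2) (auto simp: \<gamma>_def)
  also have "\<dots> < \<infinity>" by simp
  finally show ?thesis .
qed

end
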